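(* Let $\mathbf S=\langle S,+,0,\mathscr F\rangle$ be a semilattice with operators, and for $\theta\in\operatorname{Con}\mathbf S$ let $\eta(\theta)$ and $\tau(\theta)$ denote respectively the least and greatest congruences of $\mathbf S$ having the same $0$-class as $\theta$. If congruences $\zeta,\gamma,\chi\in\operatorname{Con}\mathbf S$ satisfy $\eta(\zeta)\le\eta(\gamma)$ and $\tau(\chi)\le\tau(\gamma)$, then \[ \eta\big(\eta(\zeta)\vee\tau(\zeta\wedge\chi)\big)\le\eta(\gamma). \]
   Context: A semilattice with operators is a join semilattice $(S,+)$ with least element $0$ together with a set $\mathscr F$ of unary maps preserving $+$ and $0$; congruences are equivalence relations compatible with $+$ and all $f\in\mathscr F$. If $I$ is the $0$-class of $\theta$, then $x\,\eta(\theta)\,y$ iff $x+i=y+i$ for some $i\in I$, and $x\,\tau(\theta)\,y$ iff for every $h$ in the monoid generated by $\mathscr F$ (including the identity), $h(x)\in I\Leftrightarrow h(y)\in I$. *)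

theory Defs
  imports Main
begin

text \<open>A semilattice with operators: the ambient type is the join semilattice
  (join = sup, least element = bot); F is the set of operators.\<close>

definition is_operator :: "('a::bounded_semilattice_sup_bot \<Rightarrow> 'a) \<Rightarrow> bool" where
  "is_operator f \<longleftrightarrow> (\<forall>x y. f (sup x y) = sup (f x) (f y)) \<and> f bot = bot"

definition sl_cong :: "('a::bounded_semilattice_sup_bot \<Rightarrow> 'a) set \<Rightarrow> 'a rel \<Rightarrow> bool" where
  "sl_cong F \<theta> \<longleftrightarrow> equiv UNIV \<theta>
     \<and> (\<forall>x y u v. (x, y) \<in> \<theta> \<and> (u, v) \<in> \<theta> \<longrightarrow> (sup x u, sup y v) \<in> \<theta>)
     \<and> (\<forall>f\<in>F. \<forall>x y. (x, y) \<in> \<theta> \<longrightarrow> (f x, f y) \<in> \<theta>)"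

definition zero_class :: "'a::bounded_semilattice_sup_bot rel \<Rightarrow> 'a set" where
  "zero_class \<theta> = {x. (x, bot) \<in> \<theta>}"

definition eta :: "('a::bounded_semilattice_sup_bot \<Rightarrow> 'a) set \<Rightarrow> 'a rel \<Rightarrow> 'a rel" where
  "eta F \<theta> = (LEAST \<phi>. sl_cong F \<phi> \<and> zero_class \<phi> = zero_class \<theta>)"

definition tau :: "('a::bounded_semilattice_sup_bot \<Rightarrow> 'a) set \<Rightarrow> 'a rel \<Rightarrow> 'a rel" where
  "tau F \<theta> = (GREATEST \<phi>. sl_cong F \<phi> \<and> zero_class \<phi> = zero_class \<theta>)"

definition cong_join :: "('a::bounded_semilattice_sup_bot \<Rightarrow> 'a) set \<Rightarrow> 'a rel \<Rightarrow> 'a rel \<Rightarrow> 'a rel" where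
  "cong_join F \<alpha> \<beta> = \<Inter>{\<phi>. sl_cong F \<phi> \<and> \<alpha> \<union> \<beta> \<subseteq> \<phi>}"

end

theory Submission
  imports Defs
begin

inductive_set mon :: "('a \<Rightarrow> 'a) set \<Rightarrow> ('a \<Rightarrow> 'a) set" for F where
  mon_id: "id \<in> mon F"
| mon_step: "f \<in> F \<Longrightarrow> h \<in> mon F \<Longrightarrow> f \<circ> h \<in> mon F"

lemma mon_comp: "h \<in> mon F \<Longrightarrow> g \<in> mon F \<Longrightarrow> h \<circ> g \<in> mon F"
  by (induction h rule: mon.induct) (auto simp: comp_assoc intro: mon.intros)

lemma mon_single: "f \<in> F \<Longrightarrow> f \<in> mon F"
  using mon_step[OF _ mon_id, of f F] by simp

lemma mon_op: assumes "\<forall>f\<in>F. is_operator f" "h \<in> mon F" shows "is_operator h"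
  using assms(2)
proof (induction h rule: mon.induct)
  case (mon_step f h)
  then show ?case using assms(1) by (auto simp: is_operator_def)
qed (auto simp: is_operator_def)

lemma op_mono:
  fixes h :: "'a::bounded_semilattice_sup_bot \<Rightarrow> 'a"
  assumes "is_operator h" "x \<le> y" shows "h x \<le> h y"
proof -
  have "y = sup x y" using assms(2) by (simp add: sup.absorb2)
  then have "h y = sup (h x) (h y)" using assms(1) unfolding is_operator_def by metis
  then show ?thesis by (metis sup.cobounded1)
qed

lemma cong_mon: assumes "sl_cong F \<theta>" "h \<in> mon F" "(x,y) \<in> \<theta>" shows "(h x, h y) \<in> \<theta>"
  using assms(2)
proof (induction h rule: mon.induct)
  case (mon_step f h)
  then show ?case using assms(1) by (auto simp: sl_cong_def)
qed (use assms(3) in auto)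

lemma cong_refl: "sl_cong F \<theta> \<Longrightarrow> (x,x) \<in> \<theta>"
  unfolding sl_cong_def equiv_def refl_on_def by blast
lemma cong_sym: "sl_cong F \<theta> \<Longrightarrow> (x,y) \<in> \<theta> \<Longrightarrow> (y,x) \<in> \<theta>"
  unfolding sl_cong_def equiv_def sym_def by blast
lemma cong_trans: "sl_cong F \<theta> \<Longrightarrow> (x,y) \<in> \<theta> \<Longrightarrow> (y,z) \<in> \<theta> \<Longrightarrow> (x,z) \<in> \<theta>"
  unfolding sl_cong_def equiv_def trans_def by blast
lemma cong_sup: "sl_cong F \<theta> \<Longrightarrow> (x,y) \<in> \<theta> \<Longrightarrow> (u,v) \<in> \<theta> \<Longrightarrow> (sup x u, sup y v) \<in> \<theta>"
  unfolding sl_cong_def by blast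

lemma cong_intro:
  assumes "\<And>x. (x,x) \<in> \<theta>" "\<And>x y. (x,y) \<in> \<theta> \<Longrightarrow> (y,x) \<in> \<theta>"
    "\<And>x y z. (x,y) \<in> \<theta> \<Longrightarrow> (y,z) \<in> \<theta> \<Longrightarrow> (x,z) \<in> \<theta>"
    "\<And>x y u v. (x,y) \<in> \<theta> \<Longrightarrow> (u,v) \<in> \<theta> \<Longrightarrow> (sup x u, sup y v) \<in> \<theta>"
    "\<And>f x y. f \<in> F \<Longrightarrow> (x,y) \<in> \<theta> \<Longrightarrow> (f x, f y) \<in> \<theta>"
  shows "sl_cong F \<theta>"
proof -
  have "equiv UNIV \<theta>"
    by (rule equivI) (auto simp: refl_on_def sym_def intro: transI assms(1,2,3))
  then show ?thesis unfolding sl_cong_def using assms(4,5) by blast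
qed

lemma cong_Inter:
  assumes "S \<noteq> {}" "\<forall>\<phi>\<in>S. sl_cong F \<phi>" shows "sl_cong F (\<Inter>S)"
proof (rule cong_intro)
  show "(x,x) \<in> \<Inter>S" for x
  proof
    fix \<phi> assume "\<phi> \<in> S" then show "(x,x) \<in> \<phi>" using assms(2) cong_refl by metis
  qed
  show "(y,x) \<in> \<Inter>S" if H: "(x,y) \<in> \<Inter>S" for x y
  proof
    fix \<phi> assume p: "\<phi> \<in> S" then have "(x,y) \<in> \<phi>" using H by blast
    then show "(y,x) \<in> \<phi>" using assms(2) p cong_sym by metis
  qed
  show "(x,z) \<in> \<Inter>S" if H: "(x,y) \<in> \<Inter>S" "(y,z) \<in> \<Inter>S" for x y z
  proof
    fix \<phi> assume p: "\<phi> \<in> S" then have "(x,y) \<in> \<phi>" "(y,z) \<in> \<phi>" using H by blast+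
    then show "(x,z) \<in> \<phi>" using assms(2) p cong_trans by metis
  qed
  show "(sup x u, sup y v) \<in> \<Inter>S" if H: "(x,y) \<in> \<Inter>S" "(u,v) \<in> \<Inter>S" for x y u v
  proof
    fix \<phi> assume p: "\<phi> \<in> S" then have "(x,y) \<in> \<phi>" "(u,v) \<in> \<phi>" using H by blast+
    then show "(sup x u, sup y v) \<in> \<phi>" using assms(2) p cong_sup by metis
  qed
  show "(f x, f y) \<in> \<Inter>S" if H: "f \<in> F" "(x,y) \<in> \<Inter>S" for f x y
  proof
    fix \<phi> assume p: "\<phi> \<in> S" then have "(x,y) \<in> \<phi>" using H by blast
    moreover have "sl_cong F \<phi>" using assms(2) p by blast
    ultimately show "(f x, f y) \<in> \<phi>" using H(1) unfolding sl_cong_def by blast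
  qed
qed

lemma cong_UNIV: "sl_cong F UNIV"
  by (rule cong_intro) simp_all

context
  fixes F :: "('a::bounded_semilattice_sup_bot \<Rightarrow> 'a) set" and \<theta> :: "'a rel"
  assumes ops: "\<forall>f\<in>F. is_operator f" and cg: "sl_cong F \<theta>"
begin

lemma zc_bot: "bot \<in> zero_class \<theta>"
  using cong_refl[OF cg] by (simp add: zero_class_def)

lemma zc_sup: "x \<in> zero_class \<theta> \<Longrightarrow> y \<in> zero_class \<theta> \<Longrightarrow> sup x y \<in> zero_class \<theta>"
  using cong_sup[OF cg, of x bot y bot] by (simp add: zero_class_def)

lemma zc_down: assumes "x \<le> y" "y \<in> zero_class \<theta>" shows "x \<in> zero_class \<theta>"
proof -
  have "(y, bot) \<in> \<theta>" using assms(2) by (simp add: zero_class_def)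
  then have "(sup x y, sup x bot) \<in> \<theta>"
    using cong_sup[OF cg cong_refl[OF cg]] by blast
  then have "(y, x) \<in> \<theta>" using assms(1) by (simp add: sup.absorb2)
  then have "(x, y) \<in> \<theta>" using cong_sym[OF cg] by blast
  moreover have "(y, bot) \<in> \<theta>" using assms(2) by (simp add: zero_class_def)
  ultimately have "(x, bot) \<in> \<theta>" using cong_trans[OF cg] by blast
  then show ?thesis by (simp add: zero_class_def)
qed

lemma zc_sup_iff: "sup x y \<in> zero_class \<theta> \<longleftrightarrow> x \<in> zero_class \<theta> \<and> y \<in> zero_class \<theta>"
  using zc_sup zc_down[of x "sup x y"] zc_down[of y "sup x y"] by auto

lemma zc_mon: assumes "h \<in> mon F" "x \<in> zero_class \<theta>" shows "h x \<in> zero_class \<theta>"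
proof -
  have "(h x, h bot) \<in> \<theta>" using cong_mon[OF cg assms(1)] assms(2) by (simp add: zero_class_def)
  moreover have "h bot = bot" using mon_op[OF ops assms(1)] by (simp add: is_operator_def)
  ultimately show ?thesis by (simp add: zero_class_def)
qed

end

definition etaI :: "'a::bounded_semilattice_sup_bot set \<Rightarrow> 'a rel" where
  "etaI I = {(x,y). \<exists>i\<in>I. sup x i = sup y i}"

definition tauI :: "('a::bounded_semilattice_sup_bot \<Rightarrow> 'a) set \<Rightarrow> 'a set \<Rightarrow> 'a rel" where
  "tauI F I = {(x,y). \<forall>h\<in>mon F. h x \<in> I \<longleftrightarrow> h y \<in> I}"

context
  fixes F :: "('a::bounded_semilattice_sup_bot \<Rightarrow> 'a) set" and \<theta> :: "'a rel"
  assumes ops: "\<forall>f\<in>F. is_operator f" and cg: "sl_cong F \<theta>"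
begin

lemma etaI_cong: "sl_cong F (etaI (zero_class \<theta>))"
proof (rule cong_intro)
  let ?I = "zero_class \<theta>"
  show "(x,x) \<in> etaI ?I" for x using zc_bot[OF ops cg] by (auto simp: etaI_def)
  show "(x,y) \<in> etaI ?I \<Longrightarrow> (y,x) \<in> etaI ?I" for x y by (auto simp: etaI_def) metis
  show "(x,z) \<in> etaI ?I" if H: "(x,y) \<in> etaI ?I" "(y,z) \<in> etaI ?I" for x y z
  proof -
    obtain i j where ij: "i \<in> ?I" "j \<in> ?I" "sup x i = sup y i" "sup y j = sup z j"
      using H unfolding etaI_def by blast
    have "sup x (sup i j) = sup (sup x i) j" by (simp add: sup.assoc)
    also have "\<dots> = sup (sup y j) i" using ij by (simp add: ac_simps)
    also have "\<dots> = sup z (sup i j)" using ij by (simp add: ac_simps)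
    finally show ?thesis using zc_sup[OF ops cg ij(1,2)] by (auto simp: etaI_def)
  qed
  show "(sup x u, sup y v) \<in> etaI ?I" if H: "(x,y) \<in> etaI ?I" "(u,v) \<in> etaI ?I" for x y u v
  proof -
    obtain i j where ij: "i \<in> ?I" "j \<in> ?I" "sup x i = sup y i" "sup u j = sup v j"
      using H unfolding etaI_def by blast
    have "sup (sup x u) (sup i j) = sup (sup x i) (sup u j)" by (simp add: ac_simps)
    also have "\<dots> = sup (sup y v) (sup i j)" using ij by (simp add: ac_simps)
    finally show ?thesis using zc_sup[OF ops cg ij(1,2)] by (auto simp: etaI_def)
  qed
  show "(f x, f y) \<in> etaI ?I" if H: "f \<in> F" "(x,y) \<in> etaI ?I" for f x y
  proof -
    obtain i where i: "i \<in> ?I" "sup x i = sup y i" using H unfolding etaI_def by blast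
    have op: "is_operator f" using ops H by blast
    have "sup (f x) (f i) = sup (f y) (f i)" using op i unfolding is_operator_def by metis
    moreover have "f i \<in> ?I" using zc_mon[OF ops cg mon_single[OF H(1)] i(1)] .
    ultimately show ?thesis by (auto simp: etaI_def)
  qed
qed

lemma etaI_zc: "zero_class (etaI (zero_class \<theta>)) = zero_class \<theta>"
proof -
  have "(\<exists>i\<in>zero_class \<theta>. sup x i = i) \<longleftrightarrow> x \<in> zero_class \<theta>" for x
    using zc_down[OF ops cg] by (metis sup.absorb2 sup.cobounded1 sup_bot.right_neutral zc_bot[OF ops cg])
  then show ?thesis by (auto simp: zero_class_def etaI_def)
qed

lemma etaI_least: assumes "sl_cong F \<phi>" "zero_class \<phi> = zero_class \<theta>"
  shows "etaI (zero_class \<theta>) \<subseteq> \<phi>"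
proof
  fix p assume "p \<in> etaI (zero_class \<theta>)"
  then obtain x y i where p: "p = (x,y)" "(i, bot) \<in> \<phi>" "sup x i = sup y i"
    using assms(2) by (auto simp: etaI_def zero_class_def)
  have "(sup x i, sup x bot) \<in> \<phi>" "(sup y i, sup y bot) \<in> \<phi>"
    using cong_sup[OF assms(1) cong_refl[OF assms(1)] p(2)] by auto
  then show "p \<in> \<phi>" using p cong_sym[OF assms(1)] cong_trans[OF assms(1)] by (metis sup_bot.right_neutral)
qed

lemma eta_eq: "eta F \<theta> = etaI (zero_class \<theta>)"
  unfolding eta_def
  by (rule Least_equality) (use etaI_cong etaI_zc etaI_least in auto)

lemma tauI_cong: "sl_cong F (tauI F (zero_class \<theta>))"
proof (rule cong_intro)
  let ?I = "zero_class \<theta>"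
  show "(x,x) \<in> tauI F ?I" for x by (auto simp: tauI_def)
  show "(x,y) \<in> tauI F ?I \<Longrightarrow> (y,x) \<in> tauI F ?I" for x y by (auto simp: tauI_def)
  show "(x,y) \<in> tauI F ?I \<Longrightarrow> (y,z) \<in> tauI F ?I \<Longrightarrow> (x,z) \<in> tauI F ?I" for x y z
    by (auto simp: tauI_def)
  show "(sup x u, sup y v) \<in> tauI F ?I" if "(x,y) \<in> tauI F ?I" "(u,v) \<in> tauI F ?I" for x y u v
  proof -
    have hd: "h (sup a b) = sup (h a) (h b)" if "h \<in> mon F" for h a b
      using mon_op[OF ops that] by (simp add: is_operator_def)
    then have "h (sup x u) \<in> ?I \<longleftrightarrow> h (sup y v) \<in> ?I" if h: "h \<in> mon F" for h
    proof -
      have "h (sup x u) = sup (h x) (h u)" "h (sup y v) = sup (h y) (h v)" using h hd by auto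
      moreover have "h x \<in> ?I \<longleftrightarrow> h y \<in> ?I" "h u \<in> ?I \<longleftrightarrow> h v \<in> ?I"
        using h \<open>(x,y) \<in> tauI F ?I\<close> \<open>(u,v) \<in> tauI F ?I\<close> by (auto simp: tauI_def)
      ultimately show ?thesis by (simp add: zc_sup_iff[OF ops cg])
    qed
    then show ?thesis by (auto simp: tauI_def)
  qed
  show "(f x, f y) \<in> tauI F ?I" if "f \<in> F" "(x,y) \<in> tauI F ?I" for f x y
  proof -
    have "h \<circ> f \<in> mon F" if "h \<in> mon F" for h using mon_comp[OF that mon_single] \<open>f \<in> F\<close> by blast
    then show ?thesis using that(2) unfolding tauI_def by (auto simp del: comp_apply) (metis comp_apply)+
  qed
qed

lemma tauI_zc: "zero_class (tauI F (zero_class \<theta>)) = zero_class \<theta>"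
proof -
  have hb: "h bot = bot" if "h \<in> mon F" for h using mon_op[OF ops that] by (simp add: is_operator_def)
  have "(x, bot) \<in> tauI F (zero_class \<theta>) \<longleftrightarrow> x \<in> zero_class \<theta>" for x
  proof
    assume "(x, bot) \<in> tauI F (zero_class \<theta>)"
    then have "id x \<in> zero_class \<theta> \<longleftrightarrow> id bot \<in> zero_class \<theta>"
      using mon_id[of F] unfolding tauI_def by blast
    then show "x \<in> zero_class \<theta>" using zc_bot[OF ops cg] by simp
  next
    assume "x \<in> zero_class \<theta>"
    then show "(x, bot) \<in> tauI F (zero_class \<theta>)"
      using zc_mon[OF ops cg] zc_bot[OF ops cg] hb unfolding tauI_def by simp
  qed
  then show ?thesis by (auto simp: zero_class_def)
qed

lemma tauI_greatest: assumes "sl_cong F \<phi>" "zero_class \<phi> = zero_class \<theta>"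
  shows "\<phi> \<subseteq> tauI F (zero_class \<theta>)"
proof
  fix p assume p: "p \<in> \<phi>"
  obtain x y where xy: "p = (x,y)" by force
  have "(h x, h y) \<in> \<phi>" if "h \<in> mon F" for h using cong_mon[OF assms(1) that] p xy by simp
  then have "h x \<in> zero_class \<phi> \<longleftrightarrow> h y \<in> zero_class \<phi>" if "h \<in> mon F" for h
  proof -
    have a: "(h x, h y) \<in> \<phi>" using that \<open>\<And>h. h \<in> mon F \<Longrightarrow> (h x, h y) \<in> \<phi>\<close> by blast
    have b: "(h y, h x) \<in> \<phi>" using cong_sym[OF assms(1) a] .
    show ?thesis unfolding zero_class_def
      using cong_trans[OF assms(1) a, of bot] cong_trans[OF assms(1) b, of bot] by auto
  qed
  then show "p \<in> tauI F (zero_class \<theta>)" using assms(2) xy by (auto simp: tauI_def)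
qed

lemma tau_eq: "tau F \<theta> = tauI F (zero_class \<theta>)"
  unfolding tau_def
  by (rule Greatest_equality) (use tauI_cong tauI_zc tauI_greatest in auto)

end

lemma cong_rtrancl:
  assumes "sl_cong F A" "sl_cong F B"
  shows "sl_cong F ((A \<union> B)\<^sup>*)"
proof -
  let ?R = "A \<union> B"
  have symR: "(x,y) \<in> ?R \<Longrightarrow> (y,x) \<in> ?R" for x y using assms cong_sym by blast
  have supR: "(x,y) \<in> ?R \<Longrightarrow> (sup x u, sup y u) \<in> ?R" for x y u
    using assms cong_sup cong_refl by blast
  have supR2: "(x,y) \<in> ?R \<Longrightarrow> (sup u x, sup u y) \<in> ?R" for x y u
    using assms cong_sup cong_refl by blast
  have l: "(x,y) \<in> ?R\<^sup>* \<Longrightarrow> (sup x u, sup y u) \<in> ?R\<^sup>*" for x y u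
  proof (induction rule: rtrancl_induct)
    case (step y z) then show ?case using rtrancl_into_rtrancl[OF step(3) supR[OF step(2)]] by simp
  qed simp
  have r: "(x,y) \<in> ?R\<^sup>* \<Longrightarrow> (sup u x, sup u y) \<in> ?R\<^sup>*" for x y u
  proof (induction rule: rtrancl_induct)
    case (step y z) then show ?case using rtrancl_into_rtrancl[OF step(3) supR2[OF step(2)]] by simp
  qed simp
  have fR: "f \<in> F \<Longrightarrow> (x,y) \<in> ?R \<Longrightarrow> (f x, f y) \<in> ?R" for f x y
    using assms unfolding sl_cong_def by blast
  show ?thesis
  proof (rule cong_intro)
    show "(x,x) \<in> ?R\<^sup>*" for x by simp
    show "(x,y) \<in> ?R\<^sup>* \<Longrightarrow> (y,x) \<in> ?R\<^sup>*" for x y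
    proof (induction rule: rtrancl_induct)
      case (step y z) then show ?case using converse_rtrancl_into_rtrancl[OF symR[OF step(2)] step(3)] by simp
    qed simp
    show "(x,y) \<in> ?R\<^sup>* \<Longrightarrow> (y,z) \<in> ?R\<^sup>* \<Longrightarrow> (x,z) \<in> ?R\<^sup>*" for x y z by simp
    show "(sup x u, sup y v) \<in> ?R\<^sup>*" if "(x,y) \<in> ?R\<^sup>*" "(u,v) \<in> ?R\<^sup>*" for x y u v
      using l[OF that(1), of u] r[OF that(2), of y] by simp
    show "(f x, f y) \<in> ?R\<^sup>*" if H: "f \<in> F" "(x,y) \<in> ?R\<^sup>*" for f x y
      using H(2)
    proof (induction rule: rtrancl_induct)
      case (step y z) then show ?case using rtrancl_into_rtrancl[OF step(3) fR[OF H(1) step(2)]] by simp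
    qed simp
  qed
qed

theorem theorem6p1:
  fixes F :: "('a::bounded_semilattice_sup_bot \<Rightarrow> 'a) set"
    and \<zeta> \<gamma> \<chi> :: "'a rel"
  assumes "\<forall>f\<in>F. is_operator f"
    and "sl_cong F \<zeta>" and "sl_cong F \<gamma>" and "sl_cong F \<chi>"
    and "eta F \<zeta> \<subseteq> eta F \<gamma>"
    and "tau F \<chi> \<subseteq> tau F \<gamma>"
  shows "eta F (cong_join F (eta F \<zeta>) (tau F (\<zeta> \<inter> \<chi>))) \<subseteq> eta F \<gamma>"
proof -
  note ops = assms(1)
  define Iz where "Iz = zero_class \<zeta>"
  define Ig where "Ig = zero_class \<gamma>"
  define Ic where "Ic = zero_class \<chi>"
  have czc: "sl_cong F (\<zeta> \<inter> \<chi>)"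
    using cong_Inter[of "{\<zeta>,\<chi>}" F] assms(2,4) by auto
  define J where "J = zero_class (\<zeta> \<inter> \<chi>)"
  have J: "J = Iz \<inter> Ic" by (auto simp: J_def Iz_def Ic_def zero_class_def)
  have Iz_Ig: "Iz \<subseteq> Ig"
  proof
    fix i assume "i \<in> Iz"
    then have "(i, bot) \<in> eta F \<zeta>" using eta_eq[OF ops assms(2)]
      unfolding etaI_def Iz_def by (auto intro!: bexI[of _ i])
    then have "(i, bot) \<in> eta F \<gamma>" using assms(5) by blast
    then have "i \<in> zero_class (eta F \<gamma>)" by (simp add: zero_class_def)
    then show "i \<in> Ig" using eta_eq[OF ops assms(3)] etaI_zc[OF ops assms(3)] Ig_def by simp
  qed
  have tau_sub: "tauI F Ic \<subseteq> tauI F Ig"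
    using assms(6) tau_eq[OF ops assms(3)] tau_eq[OF ops assms(4)] Ig_def Ic_def by simp
  define A where "A = etaI Iz"
  define B where "B = tauI F J"
  have cA: "sl_cong F A" using etaI_cong[OF ops assms(2)] A_def Iz_def by simp
  have cB: "sl_cong F B" using tauI_cong[OF ops czc] B_def J_def by simp
  have etz: "eta F \<zeta> = A" using eta_eq[OF ops assms(2)] A_def Iz_def by simp
  have tzc: "tau F (\<zeta> \<inter> \<chi>) = B" using tau_eq[OF ops czc] B_def J_def by simp
  define \<rho> where "\<rho> = cong_join F A B"
  have crho: "sl_cong F \<rho>" unfolding \<rho>_def cong_join_def
    by (rule cong_Inter) (use cong_UNIV in auto)
  have rho_sub: "\<rho> \<subseteq> (A \<union> B)\<^sup>*" unfolding \<rho>_def cong_join_def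
    using cong_rtrancl[OF cA cB] by blast
  have Ig_down: "x \<le> y \<Longrightarrow> y \<in> Ig \<Longrightarrow> x \<in> Ig" for x y using zc_down[OF ops assms(3)] Ig_def by blast
  have Ig_sup: "x \<in> Ig \<Longrightarrow> y \<in> Ig \<Longrightarrow> sup x y \<in> Ig" for x y using zc_sup[OF ops assms(3)] Ig_def by blast
  have Iz_down: "x \<le> y \<Longrightarrow> y \<in> Iz \<Longrightarrow> x \<in> Iz" for x y using zc_down[OF ops assms(2)] Iz_def by blast
  have Iz_sup: "x \<in> Iz \<Longrightarrow> y \<in> Iz \<Longrightarrow> sup x y \<in> Iz" for x y using zc_sup[OF ops assms(2)] Iz_def by blast
  have Iz_mon: "h \<in> mon F \<Longrightarrow> x \<in> Iz \<Longrightarrow> h x \<in> Iz" for h x using zc_mon[OF ops assms(2)] Iz_def by blast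
  have Ic_down: "x \<le> y \<Longrightarrow> y \<in> Ic \<Longrightarrow> x \<in> Ic" for x y using zc_down[OF ops assms(4)] Ic_def by blast
  have hop: "h \<in> mon F \<Longrightarrow> is_operator h" for h using mon_op[OF ops] by blast
  have inv: "\<exists>u. y \<le> u \<and> u \<in> Ig \<and> (\<forall>h\<in>mon F. h u \<in> Ic \<longrightarrow> h u \<in> Iz)"
    if "(bot, y) \<in> (A \<union> B)\<^sup>*" for y
    using that
  proof (induction rule: rtrancl_induct)
    case base
    have "h bot \<in> Iz" if "h \<in> mon F" for h
      using hop[OF that] zc_bot[OF ops assms(2)] Iz_def by (simp add: is_operator_def)
    then show ?case
      using zc_bot[OF ops assms(3)] Ig_def by (intro exI[of _ bot]) auto
  next
    case (step y y')
    then obtain u where u: "y \<le> u" "u \<in> Ig" "\<forall>h\<in>mon F. h u \<in> Ic \<longrightarrow> h u \<in> Iz" by blast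
    define u' where "u' = sup u y'"
    have uu': "u \<le> u'" "y' \<le> u'" by (auto simp: u'_def)
    have monu: "h u \<le> h u'" if "h \<in> mon F" for h using op_mono[OF hop[OF that] uu'(1)] .
    from step(2) show ?case
    proof
      assume "(y,y') \<in> A"
      then obtain i where i: "i \<in> Iz" "sup y i = sup y' i" by (auto simp: A_def etaI_def)
      have "y' \<le> sup y' i" by simp
      also have "\<dots> = sup y i" using i(2) by simp
      also have "\<dots> \<le> sup u i" using u(1) sup.mono by blast
      finally have "y' \<le> sup u i" .
      then have le: "u' \<le> sup u i" unfolding u'_def by simp
      have "sup u i \<in> Ig" using Ig_sup u(2) i(1) Iz_Ig by blast
      then have g: "u' \<in> Ig" using Ig_down le by blast
      have "h u' \<in> Iz" if "h \<in> mon F" "h u' \<in> Ic" for h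
      proof -
        have "h u \<in> Iz" using u(3) that Ic_down monu by blast
        moreover have "h i \<in> Iz" using Iz_mon that(1) i(1) by blast
        moreover have "h u' \<le> sup (h u) (h i)"
          using op_mono[OF hop[OF that(1)] le] hop[OF that(1)] by (simp add: is_operator_def)
        ultimately show ?thesis using Iz_sup Iz_down by blast
      qed
      then show ?thesis using g uu' by blast
    next
      assume "(y,y') \<in> B"
      then have "(sup u y, sup u y') \<in> B" using cong_sup[OF cB cong_refl[OF cB]] by blast
      then have uB: "(u, u') \<in> B" using u(1) by (simp add: u'_def sup.absorb1)
      have c1: "h u' \<in> Iz" if "h \<in> mon F" "h u' \<in> Ic" for h
      proof -
        have "h u \<in> J" using u(3) that Ic_down monu J by blast
        then show ?thesis using uB that(1) J by (auto simp: B_def tauI_def)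
      qed
      have "(u, u') \<in> tauI F Ic"
        unfolding tauI_def
      proof (clarsimp)
        fix h assume h: "h \<in> mon F"
        show "h u \<in> Ic \<longleftrightarrow> h u' \<in> Ic"
        proof
          assume "h u \<in> Ic"
          then have "h u \<in> J" using u(3) h J by blast
          then show "h u' \<in> Ic" using uB h J by (auto simp: B_def tauI_def)
        next
          assume "h u' \<in> Ic" then show "h u \<in> Ic" using Ic_down monu h by blast
        qed
      qed
      then have "(u, u') \<in> tauI F Ig" using tau_sub by blast
      then have "u' \<in> Ig" using u(2) mon_id by (force simp: tauI_def)
      then show ?thesis using c1 uu' by blast
    qed
  qed
  have K: "zero_class \<rho> \<subseteq> Ig"
  proof
    fix x assume "x \<in> zero_class \<rho>"
    then have "(x, bot) \<in> (A \<union> B)\<^sup>*" using rho_sub by (auto simp: zero_class_def)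
    then have "(bot, x) \<in> (A \<union> B)\<^sup>*"
      using cong_sym[OF cong_rtrancl[OF cA cB]] by blast
    then show "x \<in> Ig" using inv Ig_down by blast
  qed
  have "eta F \<rho> = etaI (zero_class \<rho>)" using eta_eq[OF ops crho] .
  also have "\<dots> \<subseteq> etaI Ig" using K by (auto simp: etaI_def)
  also have "\<dots> = eta F \<gamma>" using eta_eq[OF ops assms(3)] Ig_def by simp
  finally show ?thesis using etz tzc \<rho>_def by simp
qed

end
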